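(* Let $p$ be a prime and let $(G,H,T)$ be an RCC loop folder of order $p$ with $\langle T\rangle=G$. Then $G$ is abelian.
   Context: A loop folder is a triple $(G,H,T)$ with $G$ a finite group, $H\le G$, and $T\subseteq G$ with $1\in T$ such that $T$ is a set of representatives for the right cosets $H^g\backslash G$ for every $g\in G$. It is an RCC loop folder if moreover $T$ is invariant under conjugation by $G$. Its order is $|T|$. *)

theory Defs
  imports "HOL-Algebra.Algebra"
begin

definition conj_set :: "('a, 'b) monoid_scheme \<Rightarrow> 'a set \<Rightarrow> 'a \<Rightarrow> 'a set" where
  "conj_set G H g = (\<lambda>h. inv\<^bsub>G\<^esub> g \<otimes>\<^bsub>G\<^esub> h \<otimes>\<^bsub>G\<^esub> g) ` H"

definition right_transversal :: "('a, 'b) monoid_scheme \<Rightarrow> 'a set \<Rightarrow> 'a set \<Rightarrow> bool" where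
  "right_transversal G K T \<longleftrightarrow> T \<subseteq> carrier G \<and>
     (\<forall>C \<in> rcosets\<^bsub>G\<^esub> K. card (C \<inter> T) = 1)"

definition loop_folder :: "('a, 'b) monoid_scheme \<Rightarrow> 'a set \<Rightarrow> 'a set \<Rightarrow> bool" where
  "loop_folder G H T \<longleftrightarrow> group G \<and> finite (carrier G) \<and> subgroup H G \<and>
     T \<subseteq> carrier G \<and> \<one>\<^bsub>G\<^esub> \<in> T \<and>
     (\<forall>g \<in> carrier G. right_transversal G (conj_set G H g) T)"

definition RCC_loop_folder :: "('a, 'b) monoid_scheme \<Rightarrow> 'a set \<Rightarrow> 'a set \<Rightarrow> bool" where
  "RCC_loop_folder G H T \<longleftrightarrow> loop_folder G H T \<and>
     (\<forall>g \<in> carrier G. \<forall>t \<in> T. inv\<^bsub>G\<^esub> g \<otimes>\<^bsub>G\<^esub> t \<otimes>\<^bsub>G\<^esub> g \<in> T)"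

end

theory Submission
  imports Defs
begin


lemma cauchy_weak:
  fixes G :: "('a, 'b) monoid_scheme" (structure)
  assumes G: "group G" and fin: "finite (carrier G)" and p: "Factorial_Ring.prime (p::nat)"
    and dv: "p dvd order G"
  shows "\<exists>c\<in>carrier G. c \<noteq> \<one>\<^bsub>G\<^esub> \<and> c [^]\<^bsub>G\<^esub> p = \<one>\<^bsub>G\<^esub>"
proof -
  interpret group G by (rule G)
  define a where "a = multiplicity p (order G)"
  have ogt: "order G > 0" using fin by (simp add: order_gt_0_iff_finite)
  have "p ^ a dvd order G" unfolding a_def by (rule multiplicity_dvd)
  then obtain m where om: "order G = p ^ a * m" by blast
  have a1: "a \<ge> 1" unfolding a_def using dv ogt p
    using multiplicity_gt_zero_iff[of "order G" p] using prime_gt_1_nat[OF p] by (simp add: not_prime_unit Suc_le_eq)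
  obtain P where P: "subgroup P G" "card P = p ^ a"
    using sylow_thm[OF p G om fin] by blast
  interpret P: subgroup P G by (rule P(1))
  have gP: "group (G\<lparr>carrier := P\<rparr>)" by (rule P.subgroup_is_group) (rule G)
  have finP: "finite P" using fin P.subset finite_subset by blast
  have "p ^ a = p * p ^ (a - 1)" using a1 by (cases a) auto
  moreover have "p ^ (a - 1) \<ge> 1" using prime_gt_1_nat[OF p] by simp
  ultimately have "card P \<ge> p" using P(2) by simp
  hence "card P \<ge> 2" using prime_ge_2_nat[OF p] by linarith
  then obtain x where x: "x \<in> P" "x \<noteq> \<one>"
  proof -
    have "P \<noteq> {\<one>}" using \<open>card P \<ge> 2\<close> by auto
    then show ?thesis using that P.one_closed by blast
  qed
  have xG: "x \<in> carrier G" using x P.subset by blast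
  have "x [^]\<^bsub>G\<lparr>carrier := P\<rparr>\<^esub> order (G\<lparr>carrier := P\<rparr>) = \<one>\<^bsub>G\<lparr>carrier := P\<rparr>\<^esub>"
    using group.pow_order_eq_1[OF gP] x by simp
  hence xa: "x [^] (p ^ a) = \<one>" using P(2) by (simp add: order_def flip: nat_pow_consistent)
  define b where "b = (LEAST b. x [^] (p ^ b) = \<one>)"
  have xb: "x [^] (p ^ b) = \<one>" unfolding b_def by (rule LeastI[of _ a]) (rule xa)
  have b0: "b \<noteq> 0"
  proof
    assume "b = 0" with xb xG x show False by simp
  qed
  have nb: "x [^] (p ^ (b - 1)) \<noteq> \<one>"
  proof
    assume "x [^] (p ^ (b - 1)) = \<one>"
    hence "b \<le> b - 1" unfolding b_def by (rule Least_le)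
    with b0 show False by simp
  qed
  have "(x [^] (p ^ (b - 1))) [^] p = \<one>"
  proof -
    have "p ^ (b - 1) * p = p ^ b" using b0 by (cases b) auto
    thus ?thesis using xb xG by (simp add: nat_pow_pow)
  qed
  then show ?thesis using nb xG by (intro bexI[of _ "x [^] (p ^ (b - 1))"]) auto
qed




locale core = group Q for Q (structure) +
  fixes Om :: "'w set" and act :: "'a \<Rightarrow> 'w \<Rightarrow> 'w" and S :: "'a set" and w0 :: 'w and p :: nat
  assumes p_prime: "Factorial_Ring.prime p"
  and finX: "finite (carrier Q)"
  and finOm: "finite Om" and cardOm: "card Om = p" and w0: "w0 \<in> Om"
  and act_closed: "x \<in> carrier Q \<Longrightarrow> w \<in> Om \<Longrightarrow> act x w \<in> Om"
  and act_mult: "x \<in> carrier Q \<Longrightarrow> y \<in> carrier Q \<Longrightarrow> w \<in> Om \<Longrightarrow> act (x \<otimes> y) w = act x (act y w)"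
  and act_one: "w \<in> Om \<Longrightarrow> act \<one> w = w"
  and faithful: "x \<in> carrier Q \<Longrightarrow> y \<in> carrier Q \<Longrightarrow> (\<And>w. w \<in> Om \<Longrightarrow> act x w = act y w) \<Longrightarrow> x = y"
  and S_sub: "S \<subseteq> carrier Q" and one_S: "\<one> \<in> S" and cardS: "card S = p"
  and S_inj: "inj_on (\<lambda>s. act s w0) S"
  and S_fpf: "s \<in> S \<Longrightarrow> s \<noteq> \<one> \<Longrightarrow> w \<in> Om \<Longrightarrow> act s w \<noteq> w"
  and S_conj: "s \<in> S \<Longrightarrow> x \<in> carrier Q \<Longrightarrow> inv x \<otimes> s \<otimes> x \<in> S"
begin

lemma p_gt1: "p > 1" using p_prime prime_gt_1_nat by blast

lemma finS: "finite S"
proof (rule ccontr)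
  assume "infinite S" hence "card S = 0" by simp
  with cardS p_gt1 show False by simp
qed

lemma act_inv1: "x \<in> carrier Q \<Longrightarrow> w \<in> Om \<Longrightarrow> act (inv x) (act x w) = w"
  by (metis act_mult act_one inv_closed l_inv)

lemma act_inv2: "x \<in> carrier Q \<Longrightarrow> w \<in> Om \<Longrightarrow> act x (act (inv x) w) = w"
  by (metis act_mult act_one inv_closed r_inv)

lemma act_eq_cancel: "x \<in> carrier Q \<Longrightarrow> w \<in> Om \<Longrightarrow> w' \<in> Om \<Longrightarrow> act x w = act x w' \<Longrightarrow> w = w'"
  by (metis act_inv1)

lemma phi_image: "(\<lambda>s. act s w0) ` S = Om"
proof (rule card_subset_eq[OF finOm])
  show "(\<lambda>s. act s w0) ` S \<subseteq> Om" using S_sub act_closed w0 by blast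
  show "card ((\<lambda>s. act s w0) ` S) = card Om" using card_image[OF S_inj] cardS cardOm by simp
qed

lemma phi_surj: "w \<in> Om \<Longrightarrow> \<exists>s\<in>S. act s w0 = w"
  using phi_image by (metis imageE)

definition K where "K = {x \<in> carrier Q. act x w0 = w0}"

lemma one_K: "\<one> \<in> K" unfolding K_def using act_one w0 by simp

lemma card_X: "card (carrier Q) = p * card K"
proof -
  have inj: "inj_on (\<lambda>(s, k). s \<otimes> k) (S \<times> K)"
  proof (rule inj_onI, clarify)
    fix s k s' k' assume a: "s \<in> S" "k \<in> K" "s' \<in> S" "k' \<in> K" "s \<otimes> k = s' \<otimes> k'"
    have c: "s \<in> carrier Q" "s' \<in> carrier Q" "k \<in> carrier Q" "k' \<in> carrier Q"
      using a S_sub K_def by auto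
    have "act s w0 = act (s \<otimes> k) w0" using a(2) c act_mult w0 K_def by simp
    also have "\<dots> = act (s' \<otimes> k') w0" using a(5) by simp
    also have "\<dots> = act s' w0" using a(4) c act_mult w0 K_def by simp
    finally have "s = s'" using S_inj a inj_onD by fastforce
    then show "s = s' \<and> k = k'" using a(5) c by simp
  qed
  have img: "(\<lambda>(s, k). s \<otimes> k) ` (S \<times> K) = carrier Q"
  proof
    show "(\<lambda>(s, k). s \<otimes> k) ` (S \<times> K) \<subseteq> carrier Q" using S_sub K_def by auto
    show "carrier Q \<subseteq> (\<lambda>(s, k). s \<otimes> k) ` (S \<times> K)"
    proof
      fix x assume x: "x \<in> carrier Q"
      obtain s where s: "s \<in> S" "act s w0 = act x w0" using phi_surj act_closed[OF x w0] by metis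
      have sc: "s \<in> carrier Q" using s S_sub by auto
      have "act (inv s \<otimes> x) w0 = w0" using s(2)[symmetric] sc x w0 act_mult act_inv1 by simp
      hence k: "inv s \<otimes> x \<in> K" unfolding K_def using sc x by simp
      have "x = s \<otimes> (inv s \<otimes> x)" using sc x by (simp add: m_assoc[symmetric])
      then show "x \<in> (\<lambda>(s, k). s \<otimes> k) ` (S \<times> K)" using s k by force
    qed
  qed
  have "card (carrier Q) = card (S \<times> K)" using card_image[OF inj] img by simp
  also have "\<dots> = p * card K" using cardS by (simp add: card_cartesian_product)
  finally show ?thesis .
qed

lemma finK: "finite K" using finX K_def by simp

lemma cardK_pos: "card K \<ge> 1" using finK one_K by (metis One_nat_def Suc_leI card_gt_0_iff empty_iff)

lemma pow_fix: "x \<in> carrier Q \<Longrightarrow> w \<in> Om \<Longrightarrow> act x w = w \<Longrightarrow> act (x [^] (n::nat)) w = w"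
  by (induction n) (simp_all add: act_one act_mult)

lemma R1:
  assumes c: "c \<in> carrier Q" "c [^] p = \<one>" and d: "0 < d" "d < p" and w: "w \<in> Om"
    and fx: "act (c [^] d) w = w"
  shows "act c w = w"
proof -
  obtain m y where my: "d * m = p * y + gcd d p" using bezout_nat[of d p] d by auto
  have "coprime d p" using d p_prime
    by (metis coprime_commute not_less prime_imp_coprime_nat dvd_imp_le)
  hence my1: "d * m = p * y + 1" using my by simp
  have "act ((c [^] d) [^] m) w = w" using pow_fix[OF _ w fx] c by simp
  moreover have "(c [^] d) [^] m = c"
  proof -
    have "(c [^] d) [^] m = c [^] (p * y + 1)" using c by (simp add: nat_pow_pow my1)
    also have "\<dots> = c [^] (p * y) \<otimes> c" by simp
    also have "c [^] (p * y) = \<one>" using c by (simp add: nat_pow_pow[symmetric])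
    also have "\<one> \<otimes> c = c" using c by simp
    finally show ?thesis .
  qed
  ultimately show ?thesis by simp
qed

lemma orbit_inj:
  assumes c: "c \<in> carrier Q" "c [^] p = \<one>" and w: "w \<in> Om" and mv: "act c w \<noteq> w"
  shows "inj_on (\<lambda>i. act (c [^] i) w) {..<p}"
proof (rule inj_onI)
  have gen: "i = j" if ij: "i < p" "j < p" "i \<le> j" "act (c [^] i) w = act (c [^] j) w" for i j
  proof (rule ccontr)
    assume "i \<noteq> j"
    hence lt: "0 < j - i" "j - i < p" using ij by auto
    have "c [^] j = c [^] i \<otimes> c [^] (j - i)" using c ij(3) by (simp add: nat_pow_mult)
    hence "act (c [^] i) w = act (c [^] i) (act (c [^] (j - i)) w)" using ij(4) c w act_mult by simp
    hence "act (c [^] (j - i)) w = w" using act_eq_cancel c w act_closed by (metis nat_pow_closed)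
    hence "act c w = w" using R1[OF c lt w] by simp
    with mv show False by simp
  qed
  fix i j assume "i \<in> {..<p}" "j \<in> {..<p}" "act (c [^] i) w = act (c [^] j) w"
  then show "i = j" using gen[of i j] gen[of j i] by (cases "i \<le> j") auto
qed

lemma orbit_img:
  assumes c: "c \<in> carrier Q" "c [^] p = \<one>" and w: "w \<in> Om" and mv: "act c w \<noteq> w"
  shows "(\<lambda>i. act (c [^] i) w) ` {..<p} = Om"
proof (rule card_subset_eq[OF finOm])
  show "(\<lambda>i. act (c [^] i) w) ` {..<p} \<subseteq> Om" using c w act_closed by auto
  show "card ((\<lambda>i. act (c [^] i) w) ` {..<p}) = card Om"
    using card_image[OF orbit_inj[OF assms]] cardOm by simp
qed

lemma R4:
  assumes c: "c \<in> carrier Q" "c [^] p = \<one>" "c \<noteq> \<one>" and w: "w \<in> Om"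
  shows "act c w \<noteq> w"
proof
  assume fw: "act c w = w"
  obtain w' where w': "w' \<in> Om" "act c w' \<noteq> w'"
    using faithful[OF c(1) one_closed] c(3) act_one by metis
  have "w \<in> (\<lambda>i. act (c [^] i) w') ` {..<p}" using orbit_img[OF c(1,2) w'] w by simp
  then obtain k where k: "k < p" "act (c [^] k) w' = w" by auto
  have "act (c [^] (p - k)) w = w" using pow_fix[OF c(1) w fw] .
  moreover have "act (c [^] (p - k)) w = w'"
  proof -
    have "act (c [^] (p - k)) w = act (c [^] (p - k) \<otimes> c [^] k) w'"
      using k c w' act_mult by simp
    also have "c [^] (p - k) \<otimes> c [^] k = \<one>" using c k by (simp add: nat_pow_mult)
    finally show ?thesis using act_one w' by simp
  qed
  ultimately have "w' = w" by simp
  with w' fw show False by simp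
qed

lemma pow_fpf:
  assumes c: "c \<in> carrier Q" "c [^] p = \<one>" "c \<noteq> \<one>" and d: "0 < d" "d < p" and w: "w \<in> Om"
  shows "act (c [^] d) w \<noteq> w"
  using R1[OF c(1,2) d w] R4[OF c w] by blast

lemma centralizer_pow:
  assumes c: "c \<in> carrier Q" "c [^] p = \<one>" "c \<noteq> \<one>" and y: "y \<in> carrier Q"
    and com: "y \<otimes> c = c \<otimes> y"
  shows "\<exists>j<p. y = c [^] j"
proof -
  have img: "(\<lambda>i. act (c [^] i) w0) ` {..<p} = Om" using orbit_img[OF c(1,2) w0 R4[OF c w0]] .
  have "act y w0 \<in> (\<lambda>i. act (c [^] i) w0) ` {..<p}" using img act_closed[OF y w0] by simp
  then obtain j where j: "j < p" "act y w0 = act (c [^] j) w0" by auto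
  have "y = c [^] j"
  proof (rule faithful[OF y])
    show "c [^] j \<in> carrier Q" using c by simp
    fix w assume w: "w \<in> Om"
    then obtain i :: nat where i: "w = act (c [^] i) w0" using img by auto
    have ci: "c [^] i \<otimes> y = y \<otimes> c [^] i" using group_commutes_pow[OF com[symmetric] c(1) y] .
    have "act y w = act (y \<otimes> c [^] i) w0" using i c y w0 act_mult by simp
    also have "\<dots> = act (c [^] i \<otimes> y) w0" using ci by simp
    also have "\<dots> = act (c [^] i) (act (c [^] j) w0)" using c y w0 act_mult j by simp
    also have "\<dots> = act (c [^] i \<otimes> c [^] j) w0" using c w0 act_mult by simp
    also have "c [^] i \<otimes> c [^] j = c [^] j \<otimes> c [^] i" using c nat_pow_comm by simp
    also have "act (c [^] j \<otimes> c [^] i) w0 = act (c [^] j) w" using c w0 act_mult i by simp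
    finally show "act y w = act (c [^] j) w" .
  qed
  with j show ?thesis by blast
qed

end



context core begin

lemma conj_one:
  assumes "g \<in> carrier Q" "u \<in> carrier Q" "g \<otimes> u \<otimes> inv g = \<one>"
  shows "u = \<one>"
proof -
  have "g \<otimes> u = \<one> \<otimes> g" using assms inv_solve_right'[of "\<one>" "g \<otimes> u" g] by simp
  hence "g \<otimes> u = g \<otimes> \<one>" using assms by simp
  thus ?thesis using assms l_cancel by (metis one_closed)
qed

lemma S_carr: "u \<in> S \<Longrightarrow> u \<in> carrier Q" using S_sub by auto

lemma S_pow_p:
  assumes u: "u \<in> S" "u \<noteq> \<one>"
  shows "u [^] p = \<one>"
proof -
  have uc: "u \<in> carrier Q" using u S_carr by auto
  define \<phi> where "\<phi> = (\<lambda>g. \<lambda>h\<in>carrier Q. g \<otimes> h \<otimes> inv g)"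
  interpret cj: group_action Q "carrier Q" \<phi> unfolding \<phi>_def by (rule action_by_conjugation)
  have os: "card (orbit Q \<phi> u) * card (stabilizer Q \<phi> u) = order Q"
    by (rule cj.orbit_stabilizer_theorem[OF uc])
  have osub: "orbit Q \<phi> u \<subseteq> S - {\<one>}"
  proof
    fix x assume "x \<in> orbit Q \<phi> u"
    then obtain g where g0: "g \<in> carrier Q" "x = \<phi> g u" unfolding orbit_def by blast
    have g: "g \<in> carrier Q" "x = g \<otimes> u \<otimes> inv g" using g0 uc unfolding \<phi>_def by auto
    have "inv (inv g) \<otimes> u \<otimes> inv g \<in> S" using S_conj[OF u(1), of "inv g"] g by simp
    hence xS: "x \<in> S" using g by simp
    have "x \<noteq> \<one>"
    proof
      assume "x = \<one>"
      hence "g \<otimes> u \<otimes> inv g = \<one>" using g by simp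
      hence "u = \<one>" by (rule conj_one[OF g(1) uc])
      with u show False by simp
    qed
    with xS show "x \<in> S - {\<one>}" by simp
  qed
  have co: "card (orbit Q \<phi> u) \<le> p - 1"
  proof -
    have "card (orbit Q \<phi> u) \<le> card (S - {\<one>})" using card_mono[OF _ osub] finS by simp
    also have "\<dots> = p - 1" using cardS one_S finS by simp
    finally show ?thesis .
  qed
  define Z where "Z = stabilizer Q \<phi> u"
  have Zsub: "subgroup Z Q" unfolding Z_def by (rule cj.stabilizer_subgroup[OF uc])
  have "card (rcosets Z) * card Z = order Q" by (rule lagrange[OF Zsub])
  hence zdvd: "card Z dvd p * card K" using card_X by (metis dvd_triv_right order_def)
  have eq: "card (orbit Q \<phi> u) * card Z = p * card K" using os card_X unfolding Z_def order_def by simp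
  have pdz: "p dvd card Z"
  proof (rule ccontr)
    assume np: "\<not> p dvd card Z"
    hence "coprime p (card Z)" using p_prime by (simp add: prime_imp_coprime)
    hence "card Z dvd card K" using zdvd by (metis coprime_commute coprime_dvd_mult_right_iff)
    hence "card Z \<le> card K" using cardK_pos by (simp add: dvd_imp_le)
    hence "card (orbit Q \<phi> u) * card Z \<le> (p - 1) * card K" using co by (simp add: mult_le_mono)
    also have "\<dots> < p * card K" using cardK_pos p_gt1 by simp
    finally show False using eq by simp
  qed
  interpret Zs: subgroup Z Q by (rule Zsub)
  have gZ: "group (Q\<lparr>carrier := Z\<rparr>)" by (rule Zs.subgroup_is_group) (rule is_group)
  have finZ: "finite (carrier (Q\<lparr>carrier := Z\<rparr>))" using finX Zs.subset finite_subset by auto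
  obtain c where c: "c \<in> Z" "c \<noteq> \<one>" "c [^]\<^bsub>Q\<lparr>carrier := Z\<rparr>\<^esub> p = \<one>"
    using cauchy_weak[OF gZ finZ p_prime] pdz by (auto simp: order_def)
  have cc: "c \<in> carrier Q" using c Zs.subset by auto
  have cp: "c [^] p = \<one>" using c(3) by (simp flip: nat_pow_consistent)
  have "c \<otimes> u \<otimes> inv c = u" using c(1) uc unfolding Z_def stabilizer_def \<phi>_def by simp
  hence "c \<otimes> u \<otimes> inv c \<otimes> c = u \<otimes> c" by simp
  hence com: "u \<otimes> c = c \<otimes> u" using cc uc by (simp add: m_assoc)
  obtain j where j: "j < p" "u = c [^] j" using centralizer_pow[OF cc cp c(2) uc com] by blast
  have "u [^] p = c [^] (j * p)" using j cc by (simp add: nat_pow_pow)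
  also have "\<dots> = (c [^] p) [^] j" using cc by (simp add: nat_pow_pow mult.commute)
  also have "\<dots> = \<one>" using cp by simp
  finally show ?thesis .
qed

lemma semireg:
  assumes k: "k \<in> carrier Q" "act k w0 = w0" and w: "w \<in> Om" "act k w = w" "w \<noteq> w0"
  shows "k = \<one>"
proof -
  obtain u where u: "u \<in> S" "act u w0 = w" using phi_surj[OF w(1)] by blast
  have uc: "u \<in> carrier Q" using u S_carr by auto
  have u1: "u \<noteq> \<one>" using u w(3) act_one w0 by auto
  have vS: "inv k \<otimes> u \<otimes> k \<in> S" using S_conj[OF u(1) k(1)] .
  have ikw: "act (inv k) w = w" using act_inv1[OF k(1) w(1)] w(2) by simp
  have "act (inv k \<otimes> u \<otimes> k) w0 = act (inv k) (act u (act k w0))" using k uc w0 act_mult by simp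
  also have "\<dots> = w" using k(2) u(2) ikw by simp
  finally have "act (inv k \<otimes> u \<otimes> k) w0 = act u w0" using u(2) by simp
  hence veq: "inv k \<otimes> u \<otimes> k = u" using S_inj vS u(1) by (auto dest: inj_onD)
  hence "k \<otimes> (inv k \<otimes> u \<otimes> k) = k \<otimes> u" by simp
  hence com: "k \<otimes> u = u \<otimes> k" using k(1) uc by (simp add: m_assoc[symmetric])
  obtain j where j: "j < p" "k = u [^] j"
    using centralizer_pow[OF uc S_pow_p[OF u(1) u1] u1 k(1) com] by blast
  show "k = \<one>"
  proof (cases "j = 0")
    case True then show ?thesis using j by simp
  next
    case False
    hence "act (u [^] j) w0 \<noteq> w0" using pow_fpf[OF uc S_pow_p[OF u(1) u1] u1 _ j(1) w0] by simp
    with j k show ?thesis by simp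
  qed
qed

lemma two_fix:
  assumes x: "x \<in> carrier Q" "x \<noteq> \<one>" and w: "w \<in> Om" "w' \<in> Om" "act x w = w" "act x w' = w'"
  shows "w = w'"
proof -
  obtain s where s: "s \<in> S" "act s w0 = w" using phi_surj[OF w(1)] by blast
  have sc: "s \<in> carrier Q" using s S_carr by auto
  define k where "k = inv s \<otimes> x \<otimes> s"
  have kc: "k \<in> carrier Q" unfolding k_def using sc x by simp
  have kw0: "act k w0 = w0"
  proof -
    have "act k w0 = act (inv s) (act x (act s w0))" unfolding k_def using sc x w0 by (simp add: act_mult act_closed)
    also have "\<dots> = w0" using s(2) w(3) act_inv1[OF sc w0] by simp
    finally show ?thesis .
  qed
  have k1: "k \<noteq> \<one>"
  proof
    assume "k = \<one>"
    hence "x = \<one>" using sc x conj_one[of "inv s" x] unfolding k_def by simp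
    with x show False by simp
  qed
  define w'' where "w'' = act (inv s) w'"
  have w''O: "w'' \<in> Om" unfolding w''_def using act_closed sc w by simp
  have "act k w'' = act (inv s) (act x (act s w''))" unfolding k_def using sc x w''O by (simp add: act_mult act_closed)
  also have "act s w'' = w'" unfolding w''_def using act_inv2[OF sc w(2)] .
  finally have "act k w'' = w''" using w(4) w''_def by simp
  hence "w'' = w0" using semireg[OF kc kw0 w''O] k1 by blast
  hence "w' = act s w0" using act_inv2[OF sc w(2)] w''_def by simp
  with s show ?thesis by simp
qed

definition Fix where "Fix w = {x \<in> carrier Q. act x w = w}"

lemma card_Fix: assumes w: "w \<in> Om" shows "card K \<le> card (Fix w)"
proof -
  obtain s where s: "s \<in> S" "act s w0 = w" using phi_surj[OF w] by blast
  have sc: "s \<in> carrier Q" using s S_carr by auto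
  have isw: "act (inv s) w = w0" using act_inv1[OF sc w0] s(2) by simp
  show ?thesis
  proof (rule card_inj_on_le)
    show "inj_on (\<lambda>k. s \<otimes> k \<otimes> inv s) K"
      by (rule inj_onI) (use sc in \<open>auto simp: K_def\<close>)
    show "(\<lambda>k. s \<otimes> k \<otimes> inv s) ` K \<subseteq> Fix w"
    proof
      fix y assume "y \<in> (\<lambda>k. s \<otimes> k \<otimes> inv s) ` K"
      then obtain k where k: "k \<in> K" "y = s \<otimes> k \<otimes> inv s" by blast
      have kc: "k \<in> carrier Q" "act k w0 = w0" using k K_def by auto
      have "act y w = act s (act k (act (inv s) w))" using k(2) kc sc w act_mult act_closed by simp
      also have "\<dots> = w" using isw kc s(2) by simp
      finally show "y \<in> Fix w" unfolding Fix_def using k(2) kc sc by simp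
    qed
    show "finite (Fix w)" using finX unfolding Fix_def by simp
  qed
qed

definition D where "D = {x \<in> carrier Q. \<forall>w\<in>Om. act x w \<noteq> w}"

lemma card_D: "card D \<le> p - 1"
proof -
  let ?U = "carrier Q - D"
  have finD: "finite D" using finX unfolding D_def by simp
  have finU: "finite ?U" using finX by simp
  have Dsub: "D \<subseteq> carrier Q" unfolding D_def by auto
  have split: "card (carrier Q) = card ?U + card D"
    using card_Diff_subset[OF finD Dsub] card_mono[OF finX Dsub] by simp
  have disj: "\<forall>w\<in>Om. \<forall>w'\<in>Om. w \<noteq> w' \<longrightarrow> (Fix w - {\<one>}) \<inter> (Fix w' - {\<one>}) = {}"
    using two_fix unfolding Fix_def by blast
  have finF: "\<forall>w\<in>Om. finite (Fix w - {\<one>})" using finX unfolding Fix_def by simp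
  have cu: "card (\<Union>w\<in>Om. Fix w - {\<one>}) = (\<Sum>w\<in>Om. card (Fix w - {\<one>}))"
    by (rule card_UN_disjoint[OF finOm finF disj])
  have "(\<Sum>w\<in>Om. card (Fix w - {\<one>})) \<ge> (\<Sum>w\<in>Om. card K - 1)"
  proof (rule sum_mono)
    fix w assume w: "w \<in> Om"
    have "\<one> \<in> Fix w" unfolding Fix_def using act_one w by simp
    hence "card (Fix w - {\<one>}) = card (Fix w) - 1" using finX unfolding Fix_def by simp
    then show "card K - 1 \<le> card (Fix w - {\<one>})" using card_Fix[OF w] by simp
  qed
  hence sumge: "card (\<Union>w\<in>Om. Fix w - {\<one>}) \<ge> p * (card K - 1)" using cu cardOm by simp
  have sub: "insert \<one> (\<Union>w\<in>Om. Fix w - {\<one>}) \<subseteq> ?U"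
  proof
    fix x assume "x \<in> insert \<one> (\<Union>w\<in>Om. Fix w - {\<one>})"
    then show "x \<in> ?U"
    proof
      assume "x = \<one>" then show ?thesis using w0 act_one unfolding D_def by auto
    next
      assume "x \<in> (\<Union>w\<in>Om. Fix w - {\<one>})"
      then show ?thesis unfolding D_def Fix_def by auto
    qed
  qed
  have "card (insert \<one> (\<Union>w\<in>Om. Fix w - {\<one>})) = Suc (card (\<Union>w\<in>Om. Fix w - {\<one>}))"
    using finOm finF by (subst card_insert_disjoint) auto
  hence "Suc (p * (card K - 1)) \<le> card ?U" using card_mono[OF finU sub] sumge by simp
  hence "Suc (p * (card K - 1)) + card D \<le> p * card K" using split card_X by simp
  moreover have "p * card K = p * (card K - 1) + p" using cardK_pos
    by (metis add.commute le_add_diff_inverse mult.right_neutral distrib_left)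
  ultimately show ?thesis by simp
qed

lemma S_eq_pows:
  assumes u: "u \<in> S" "u \<noteq> \<one>"
  shows "S - {\<one>} = (\<lambda>j. u [^] j) ` {1..<p}"
proof -
  have uc: "u \<in> carrier Q" using u S_carr by auto
  have up: "u [^] p = \<one>" using S_pow_p[OF u] .
  have finD: "finite D" using finX unfolding D_def by simp
  have "S - {\<one>} \<subseteq> D" unfolding D_def using S_fpf S_carr by auto
  moreover have "card (S - {\<one>}) = p - 1" using cardS one_S finS by simp
  ultimately have SD: "S - {\<one>} = D" using card_seteq[OF finD] card_D by metis
  have PD: "(\<lambda>j. u [^] j) ` {1..<p} \<subseteq> D"
    unfolding D_def using pow_fpf[OF uc up u(2)] uc by auto
  have inj0: "inj_on (\<lambda>i. act (u [^] i) w0) {..<p}"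
    using orbit_inj[OF uc up w0 S_fpf[OF u w0]] .
  have inj: "inj_on (\<lambda>j. u [^] j) {1..<p}"
  proof (rule inj_onI)
    fix i j assume ij: "i \<in> {1..<p}" "j \<in> {1..<p}" "u [^] i = u [^] (j::nat)"
    hence "act (u [^] i) w0 = act (u [^] j) w0" by simp
    from inj_onD[OF inj0 this] ij show "i = j" by auto
  qed
  have "card ((\<lambda>j. u [^] j) ` {1..<p}) = p - 1" using card_image[OF inj] by simp
  hence "(\<lambda>j. u [^] j) ` {1..<p} = D" using card_seteq[OF finD PD] card_D by simp
  with SD show ?thesis by simp
qed

theorem S_comm:
  assumes u: "u \<in> S" and v: "v \<in> S"
  shows "u \<otimes> v = v \<otimes> u"
proof (cases "u = \<one> \<or> v = \<one>")
  case True then show ?thesis using u v S_carr by auto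
next
  case False
  hence "v \<in> (\<lambda>j. u [^] j) ` {1..<p}" using S_eq_pows[of u] u v by auto
  then obtain j :: nat where "v = u [^] j" by auto
  moreover have "u \<in> carrier Q" using u S_carr by auto
  ultimately show ?thesis by (simp add: nat_pow_Suc2[symmetric])
qed

end



lemma (in group) cen_subgroup:
  assumes "B \<subseteq> carrier G"
  shows "subgroup {x \<in> carrier G. \<forall>b\<in>B. x \<otimes> b = b \<otimes> x} G"
proof (rule subgroupI)
  have "\<one> \<in> {x \<in> carrier G. \<forall>b\<in>B. x \<otimes> b = b \<otimes> x}" using assms by auto
  thus "{x \<in> carrier G. \<forall>b\<in>B. x \<otimes> b = b \<otimes> x} \<noteq> {}" by blast
  fix a assume a: "a \<in> {x \<in> carrier G. \<forall>b\<in>B. x \<otimes> b = b \<otimes> x}"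
  show "inv a \<in> {x \<in> carrier G. \<forall>b\<in>B. x \<otimes> b = b \<otimes> x}"
  proof (simp, intro conjI ballI)
    show "inv a \<in> carrier G" using a by simp
    fix b assume b: "b \<in> B"
    hence bc: "b \<in> carrier G" using assms by auto
    have ac: "a \<in> carrier G" using a by simp
    have ab: "a \<otimes> b = b \<otimes> a" using a b by simp
    have "inv a \<otimes> b = inv a \<otimes> (b \<otimes> a) \<otimes> inv a" using ac bc by (simp add: m_assoc)
    also have "\<dots> = inv a \<otimes> (a \<otimes> b) \<otimes> inv a" using ab by simp
    also have "\<dots> = b \<otimes> inv a" using ac bc by (simp add: m_assoc[symmetric])
    finally show "inv a \<otimes> b = b \<otimes> inv a" .
  qed
  fix c assume c: "c \<in> {x \<in> carrier G. \<forall>b\<in>B. x \<otimes> b = b \<otimes> x}"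
  show "a \<otimes> c \<in> {x \<in> carrier G. \<forall>b\<in>B. x \<otimes> b = b \<otimes> x}"
  proof (simp, intro conjI ballI)
    show "a \<otimes> c \<in> carrier G" using a c by simp
    fix b assume b: "b \<in> B"
    hence bc: "b \<in> carrier G" using assms by auto
    have "a \<otimes> c \<otimes> b = a \<otimes> (c \<otimes> b)" using a c bc by (simp add: m_assoc)
    also have "\<dots> = a \<otimes> (b \<otimes> c)" using c b by simp
    also have "\<dots> = (a \<otimes> b) \<otimes> c" using a c bc by (simp add: m_assoc)
    also have "\<dots> = (b \<otimes> a) \<otimes> c" using a b by simp
    also have "\<dots> = b \<otimes> (a \<otimes> c)" using a c bc by (simp add: m_assoc)
    finally show "a \<otimes> c \<otimes> b = b \<otimes> (a \<otimes> c)" .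
  qed
qed auto

lemma (in group) comm_from_gen:
  assumes A: "A \<subseteq> carrier G" and com: "\<And>a b. a \<in> A \<Longrightarrow> b \<in> A \<Longrightarrow> a \<otimes> b = b \<otimes> a"
    and gen: "generate G A = carrier G"
  shows "comm_group G"
proof -
  have "generate G A \<subseteq> {x \<in> carrier G. \<forall>b\<in>A. x \<otimes> b = b \<otimes> x}"
    by (rule generate_subgroup_incl[OF _ cen_subgroup[OF A]]) (use A com in auto)
  hence s1: "\<And>x b. x \<in> carrier G \<Longrightarrow> b \<in> A \<Longrightarrow> x \<otimes> b = b \<otimes> x" using gen by auto
  have "generate G A \<subseteq> {x \<in> carrier G. \<forall>b\<in>carrier G. x \<otimes> b = b \<otimes> x}"
    by (rule generate_subgroup_incl[OF _ cen_subgroup]) (use A s1 in auto)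
  hence "\<And>x y. x \<in> carrier G \<Longrightarrow> y \<in> carrier G \<Longrightarrow> x \<otimes> y = y \<otimes> x" using gen by auto
  thus ?thesis by (rule group_comm_groupI)
qed

locale folder = group G for G (structure) +
  fixes H T and p :: nat
  assumes p_prime: "Factorial_Ring.prime p" and finG: "finite (carrier G)"
    and Hsub: "subgroup H G" and Tsub: "T \<subseteq> carrier G" and oneT: "\<one> \<in> T"
    and transv: "\<And>g. g \<in> carrier G \<Longrightarrow> right_transversal G (conj_set G H g) T"
    and Tconj: "\<And>g t. g \<in> carrier G \<Longrightarrow> t \<in> T \<Longrightarrow> inv g \<otimes> t \<otimes> g \<in> T"
    and cardT: "card T = p"
begin

lemma Hc: "H \<subseteq> carrier G" using Hsub subgroup.subset by blast

lemma conj1: "conj_set G H \<one> = H"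
proof -
  have "(\<lambda>h. inv \<one> \<otimes> h \<otimes> \<one>) ` H = (\<lambda>h. h) ` H" by (rule image_cong) (use Hc in auto)
  thus ?thesis unfolding conj_set_def by simp
qed

lemma TU:
  assumes t: "t \<in> T" "t' \<in> T" and eq: "H #> t = H #> t'"
  shows "t = t'"
proof -
  have tc: "t \<in> carrier G" "t' \<in> carrier G" using t Tsub by auto
  have C: "H #> t \<in> rcosets H" using rcosetsI[OF Hc tc(1)] .
  have "card ((H #> t) \<inter> T) = 1" using transv[OF one_closed] C conj1
    unfolding right_transversal_def by auto
  moreover have "t \<in> (H #> t) \<inter> T" using rcos_self[OF tc(1) Hsub] t by simp
  moreover have "t' \<in> (H #> t) \<inter> T" using rcos_self[OF tc(2) Hsub] t eq by simp
  ultimately show ?thesis by (metis card_1_singletonE singletonD)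
qed

definition Om where "Om = rcosets H"

lemma Om_cases: "w \<in> Om \<Longrightarrow> \<exists>x\<in>carrier G. w = H #> x"
  unfolding Om_def RCOSETS_def by auto

lemma Om_mult: assumes w: "w \<in> Om" and g: "g \<in> carrier G" shows "w #> g \<in> Om"
proof -
  obtain x where x: "x \<in> carrier G" "w = H #> x" using Om_cases[OF w] by blast
  have "w #> g = H #> (x \<otimes> g)" using x g Hc by (simp add: coset_mult_assoc)
  thus ?thesis unfolding Om_def using rcosetsI[OF Hc] x g by simp
qed

lemma Om_sub: "w \<in> Om \<Longrightarrow> w \<subseteq> carrier G"
  using Om_cases Hc r_coset_subset_G by blast

lemma Om_assoc: "w \<in> Om \<Longrightarrow> a \<in> carrier G \<Longrightarrow> b \<in> carrier G \<Longrightarrow> (w #> a) #> b = w #> (a \<otimes> b)"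
  using Om_sub coset_mult_assoc by blast

lemma Om_one: "w \<in> Om \<Longrightarrow> w #> \<one> = w"
  using Om_sub coset_mult_one by blast

lemma H_Om: "H \<in> Om"
  unfolding Om_def using rcosetsI[OF Hc one_closed] coset_mult_one[OF Hc] by simp

lemma finOm: "finite Om"
  unfolding Om_def using rcosets_subset_PowG[OF Hsub] finG by (meson finite_Pow_iff finite_subset)

lemma cardOm: "card Om = p"
proof -
  have "bij_betw (\<lambda>t. H #> t) T Om"
  proof (rule bij_betwI')
    show "\<And>x y. x \<in> T \<Longrightarrow> y \<in> T \<Longrightarrow> (H #> x = H #> y) = (x = y)" using TU by blast
    show "\<And>x. x \<in> T \<Longrightarrow> H #> x \<in> Om" unfolding Om_def using Tsub rcosetsI[OF Hc] by auto
    fix C assume C: "C \<in> Om"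
    obtain x where x: "x \<in> carrier G" "C = H #> x" using Om_cases[OF C] by blast
    have "card (C \<inter> T) = 1" using transv[OF one_closed] C conj1
      unfolding right_transversal_def Om_def by auto
    then obtain t where t: "t \<in> C" "t \<in> T" by (metis card_1_singletonE Int_iff insertI1)
    have "H #> x = H #> t" using repr_independence[of t H x] t x Hsub by simp
    then show "\<exists>t\<in>T. C = H #> t" using t x by auto
  qed
  thus ?thesis using cardT bij_betw_same_card by fastforce
qed

definition rho where "rho g = (\<lambda>w\<in>Om. w #> g)"

abbreviation B where "B \<equiv> BijGroup Om"

lemma rho_Bij: assumes g: "g \<in> carrier G" shows "rho g \<in> Bij Om"
proof -
  have "bij_betw (\<lambda>w. w #> g) Om Om"
  proof (rule bij_betw_byWitness[where f' = "\<lambda>w. w #> inv g"])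
    show "\<forall>a\<in>Om. a #> g #> inv g = a" using g by (simp add: Om_assoc Om_one)
    show "\<forall>a\<in>Om. a #> inv g #> g = a" using g by (simp add: Om_assoc Om_one)
    show "(\<lambda>w. w #> g) ` Om \<subseteq> Om" using g Om_mult by auto
    show "(\<lambda>w. w #> inv g) ` Om \<subseteq> Om" using g Om_mult by auto
  qed
  hence "bij_betw (rho g) Om Om" unfolding rho_def by (rule bij_betw_cong[THEN iffD1, rotated]) simp
  thus ?thesis unfolding Bij_def rho_def by simp
qed

lemma rho_mult: "a \<in> carrier G \<Longrightarrow> b \<in> carrier G \<Longrightarrow> rho a \<otimes>\<^bsub>B\<^esub> rho b = rho (b \<otimes> a)"
  using rho_Bij by (auto simp: BijGroup_def compose_def rho_def Om_mult Om_assoc intro!: restrict_ext)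

lemma rho_one: "rho \<one> = \<one>\<^bsub>B\<^esub>"
  by (auto simp: BijGroup_def rho_def Om_one intro!: restrict_ext)

lemma rho_inv: "a \<in> carrier G \<Longrightarrow> inv\<^bsub>B\<^esub> (rho a) = rho (inv a)"
  by (rule group.inv_equality[OF group_BijGroup])
     (auto simp: rho_mult rho_one rho_Bij BijGroup_def[of Om, THEN arg_cong[where f=carrier], simplified])

end



context folder begin

definition Xc where "Xc = rho ` carrier G"

lemma Xc_sub: "subgroup Xc B"
proof (rule group.subgroupI[OF group_BijGroup])
  show "Xc \<subseteq> carrier B" unfolding Xc_def using rho_Bij by (auto simp: BijGroup_def)
  show "Xc \<noteq> {}" unfolding Xc_def by auto
  fix a assume a: "a \<in> Xc"
  then obtain g where g: "g \<in> carrier G" "a = rho g" unfolding Xc_def by auto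
  show "inv\<^bsub>B\<^esub> a \<in> Xc" using g rho_inv unfolding Xc_def by auto
  fix b assume b: "b \<in> Xc"
  then obtain h where h: "h \<in> carrier G" "b = rho h" unfolding Xc_def by auto
  show "a \<otimes>\<^bsub>B\<^esub> b \<in> Xc" using g h rho_mult unfolding Xc_def by auto
qed

definition Q where "Q = B\<lparr>carrier := Xc\<rparr>"

lemma gQ: "group Q" unfolding Q_def
  by (rule subgroup.subgroup_is_group[OF Xc_sub group_BijGroup])

lemma Q_mult: "x \<otimes>\<^bsub>Q\<^esub> y = x \<otimes>\<^bsub>B\<^esub> y" by (simp add: Q_def)
lemma Q_one: "\<one>\<^bsub>Q\<^esub> = \<one>\<^bsub>B\<^esub>" by (simp add: Q_def)
lemma Q_carrier: "carrier Q = Xc" by (simp add: Q_def)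
lemma Q_inv: "x \<in> Xc \<Longrightarrow> inv\<^bsub>Q\<^esub> x = inv\<^bsub>B\<^esub> x"
  unfolding Q_def by (rule group.m_inv_consistent[OF group_BijGroup Xc_sub])

lemma Xc_Bij: "x \<in> Xc \<Longrightarrow> x \<in> Bij Om" unfolding Xc_def using rho_Bij by auto

lemma rho_apply: "w \<in> Om \<Longrightarrow> rho g w = w #> g" by (simp add: rho_def)

lemma T_fpf:
  assumes t: "t \<in> T" "t \<noteq> \<one>" and w: "w \<in> Om"
  shows "w #> t \<noteq> w"
proof
  assume eq: "w #> t = w"
  obtain x where x: "x \<in> carrier G" "w = H #> x" using Om_cases[OF w] by blast
  have tc: "t \<in> carrier G" using t Tsub by auto
  have "H #> (x \<otimes> t) = H #> x" using eq x tc Hc by (simp add: coset_mult_assoc)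
  hence "x \<otimes> t \<in> H #> x" using rcos_self[of "x \<otimes> t" H] x tc Hsub by simp
  hence hx: "x \<otimes> t \<otimes> inv x \<in> H" using subgroup.rcos_module_imp[OF Hsub is_group x(1)] by simp
  define K where "K = conj_set G H x"
  have "t = inv x \<otimes> (x \<otimes> t \<otimes> inv x) \<otimes> x" using x tc by (simp add: m_assoc) (simp add: m_assoc[symmetric])
  hence tK: "t \<in> K" unfolding K_def conj_set_def using hx by blast
  have oK: "\<one> \<in> K" unfolding K_def conj_set_def using x subgroup.one_closed[OF Hsub]
    by (auto simp: image_iff intro!: bexI[of _ \<one>])
  have Kc: "K \<subseteq> carrier G" unfolding K_def conj_set_def using x Hc by auto
  have "K #> \<one> \<in> rcosets K" by (rule rcosetsI[OF Kc one_closed])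
  hence "K \<in> rcosets K" using coset_mult_one[OF Kc] by simp
  hence "card (K \<inter> T) = 1" using transv[OF x(1)] unfolding right_transversal_def K_def by auto
  moreover have "t \<in> K \<inter> T" "\<one> \<in> K \<inter> T" using tK oK t oneT by auto
  ultimately have "t = \<one>" by (metis card_1_singletonE singletonD)
  with t show False by simp
qed

lemma rho_inj_T: "t \<in> T \<Longrightarrow> t' \<in> T \<Longrightarrow> rho t H = rho t' H \<Longrightarrow> t = t'"
  using TU rho_apply[OF H_Om] by (metis coset_mult_one Hc)

lemma core_inst: "core Q Om (\<lambda>f w. f w) (rho ` T) H p"
proof (intro core.intro core_axioms.intro)
  show "group Q" by (rule gQ)
  show "Factorial_Ring.prime p" by (rule p_prime)
  show "finite (carrier Q)" unfolding Q_carrier Xc_def using finG by simp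
  show "finite Om" by (rule finOm)
  show "card Om = p" by (rule cardOm)
  show "H \<in> Om" by (rule H_Om)
  fix x w assume x: "x \<in> carrier Q" and w: "w \<in> Om"
  then obtain g where g: "g \<in> carrier G" "x = rho g" unfolding Q_carrier Xc_def by auto
  show "x w \<in> Om" using g w rho_apply Om_mult by simp
next
  fix x y w assume x: "x \<in> carrier Q" and y: "y \<in> carrier Q" and w: "w \<in> Om"
  show "(x \<otimes>\<^bsub>Q\<^esub> y) w = x (y w)" using Xc_Bij x y w unfolding Q_mult Q_carrier
    by (simp add: BijGroup_def compose_def)
next
  fix w assume "w \<in> Om" then show "\<one>\<^bsub>Q\<^esub> w = w" by (simp add: Q_one BijGroup_def)
next
  fix x y assume x: "x \<in> carrier Q" and y: "y \<in> carrier Q" and eq: "\<And>w. w \<in> Om \<Longrightarrow> x w = y w"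
  show "x = y" using Xc_Bij[of x] Xc_Bij[of y] x y eq unfolding Q_carrier Bij_def
    by (auto intro: extensionalityI)
next
  show "rho ` T \<subseteq> carrier Q" unfolding Q_carrier Xc_def using Tsub by auto
  show "\<one>\<^bsub>Q\<^esub> \<in> rho ` T" using oneT rho_one Q_one by (metis image_eqI)
  have "inj_on rho T" by (rule inj_onI) (use rho_inj_T in auto)
  thus "card (rho ` T) = p" using card_image cardT by metis
  show "inj_on (\<lambda>s. s H) (rho ` T)" by (rule inj_onI) (use rho_inj_T in auto)
next
  fix s w assume s: "s \<in> rho ` T" "s \<noteq> \<one>\<^bsub>Q\<^esub>" and w: "w \<in> Om"
  then obtain t where t: "t \<in> T" "s = rho t" by auto
  have "t \<noteq> \<one>" using s t rho_one Q_one by auto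
  thus "s w \<noteq> w" using T_fpf t w rho_apply by simp
next
  fix s x assume s: "s \<in> rho ` T" and x: "x \<in> carrier Q"
  then obtain t where t: "t \<in> T" "s = rho t" by auto
  obtain g where g: "g \<in> carrier G" "x = rho g" using x unfolding Q_carrier Xc_def by auto
  have tc: "t \<in> carrier G" using t Tsub by auto
  have "inv\<^bsub>Q\<^esub> x \<otimes>\<^bsub>Q\<^esub> s \<otimes>\<^bsub>Q\<^esub> x = rho (g \<otimes> (t \<otimes> inv g))"
    using g t tc x unfolding Q_carrier by (simp add: Q_inv Q_mult rho_inv rho_mult)
  also have "g \<otimes> (t \<otimes> inv g) = inv (inv g) \<otimes> t \<otimes> inv g" using g tc by (simp add: m_assoc)
  finally show "inv\<^bsub>Q\<^esub> x \<otimes>\<^bsub>Q\<^esub> s \<otimes>\<^bsub>Q\<^esub> x \<in> rho ` T"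
    using Tconj[of "inv g" t] g t by auto
qed

lemma T_comm:
  assumes t: "t \<in> T" "t' \<in> T"
  shows "t \<otimes> t' = t' \<otimes> t"
proof -
  interpret cr: core Q Om "\<lambda>f w. f w" "rho ` T" H p by (rule core_inst)
  have tc: "t \<in> carrier G" "t' \<in> carrier G" using t Tsub by auto
  have "rho t \<otimes>\<^bsub>Q\<^esub> rho t' = rho t' \<otimes>\<^bsub>Q\<^esub> rho t" using cr.S_comm t by auto
  hence eq: "rho (t' \<otimes> t) = rho (t \<otimes> t')" using tc by (simp add: Q_mult rho_mult)
  define w where "w = H #> inv t"
  have w: "w \<in> Om" unfolding w_def using Om_mult[OF H_Om] tc by simp
  have "rho (t' \<otimes> t) w = rho (t \<otimes> t') w" using eq by simp
  hence "H #> (inv t \<otimes> (t' \<otimes> t)) = H #> (inv t \<otimes> (t \<otimes> t'))"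
    using w tc H_Om unfolding w_def by (simp add: rho_apply Om_assoc)
  also have "inv t \<otimes> (t \<otimes> t') = t'" using tc by (simp add: m_assoc[symmetric])
  finally have "H #> (inv t \<otimes> t' \<otimes> t) = H #> t'" using tc by (simp add: m_assoc)
  hence "inv t \<otimes> t' \<otimes> t = t'" using TU Tconj[OF tc(1) t(2)] t(2) by blast
  hence "t \<otimes> (inv t \<otimes> t' \<otimes> t) = t \<otimes> t'" by simp
  thus ?thesis using tc by (simp add: m_assoc[symmetric])
qed

end


theorem proposition4p3:
  fixes G :: "('a, 'b) monoid_scheme" and H T :: "'a set" and p :: nat
  assumes "Factorial_Ring.prime p"
    and "RCC_loop_folder G H T"
    and "card T = p"
    and "generate G T = carrier G"
  shows "comm_group G"
proof -
  have gG: "group G" and fl: "folder G H T p"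
    using assms unfolding RCC_loop_folder_def loop_folder_def folder_def folder_axioms_def
    by auto
  interpret folder G H T p by (rule fl)
  show ?thesis by (rule comm_from_gen[OF Tsub _ assms(4)]) (rule T_comm)
qed

end
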